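(* For any $\gamma\ge0$, the function \[ S_\gamma(x)=\hat n_0(x)+\gamma\,m(x),\qquad m(x)=\frac{x^2e^x}{(e^x-1)^2}, \] is a stationary (time-independent) super-solution of the Kompaneets problem.
   Context: $\hat n_0(x)=\frac{x^2}{e^x-1}$. Let $J(x,n)=x^2\partial_xn+(x^2-2x)n+n^2$. A function $n(x,t)$, $C^{2,1}$ for $x,t>0$, with $n_t\to n_0$ in $L^1$ as $t\to0$, such that for $0<s\le t$ the limit $n_t(0)=\lim_{x\to0^+}n_t(x)$ exists and $\lim_{x\to0^+}\int_s^t|x^2\partial_xn_\tau(x)|\,d\tau=0$, is a super-solution of the Kompaneets problem if for all $0<s\le t$: $\partial_tn\ge\partial_xJ(x,n)$ and $\liminf_{x\to\infty}\int_s^tJ(x,n_\tau)\,d\tau\ge0$. *)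

theory Defs
  imports "HOL-Analysis.Analysis"
begin

definition n0hat :: "real \<Rightarrow> real" where
  "n0hat x = x^2 / (exp x - 1)"

definition mfun :: "real \<Rightarrow> real" where
  "mfun x = x^2 * exp x / (exp x - 1)^2"

definition Jflux :: "real \<Rightarrow> real \<Rightarrow> real \<Rightarrow> real" where
  "Jflux x n nx = x^2 * nx + (x^2 - 2*x) * n + n^2"

text \<open>Functions n(x,t) are written as n x t. Partial derivatives.\<close>
definition px :: "(real \<Rightarrow> real \<Rightarrow> real) \<Rightarrow> real \<Rightarrow> real \<Rightarrow> real" where
  "px n x t = deriv (\<lambda>y. n y t) x"

definition pxx :: "(real \<Rightarrow> real \<Rightarrow> real) \<Rightarrow> real \<Rightarrow> real \<Rightarrow> real" where
  "pxx n x t = deriv (\<lambda>y. px n y t) x"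

definition pt :: "(real \<Rightarrow> real \<Rightarrow> real) \<Rightarrow> real \<Rightarrow> real \<Rightarrow> real" where
  "pt n x t = deriv (\<lambda>\<tau>. n x \<tau>) t"

definition C21 :: "(real \<Rightarrow> real \<Rightarrow> real) \<Rightarrow> bool" where
  "C21 n \<longleftrightarrow>
     (\<forall>x>0. \<forall>t>0. (\<lambda>y. n y t) differentiable (at x)
                 \<and> (\<lambda>y. px n y t) differentiable (at x)
                 \<and> (\<lambda>\<tau>. n x \<tau>) differentiable (at t))
   \<and> continuous_on ({0<..} \<times> {0<..}) (\<lambda>(x,t). n x t)
   \<and> continuous_on ({0<..} \<times> {0<..}) (\<lambda>(x,t). px n x t)
   \<and> continuous_on ({0<..} \<times> {0<..}) (\<lambda>(x,t). pxx n x t)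
   \<and> continuous_on ({0<..} \<times> {0<..}) (\<lambda>(x,t). pt n x t)"

definition kompaneets_supersolution ::
  "(real \<Rightarrow> real) \<Rightarrow> (real \<Rightarrow> real \<Rightarrow> real) \<Rightarrow> bool" where
  "kompaneets_supersolution n0 n \<longleftrightarrow>
     C21 n
   \<comment> \<open>n_t \<rightarrow> n_0 in L^1(0,\<infinity>) as t \<rightarrow> 0\<close>
   \<and> set_integrable lborel {0<..} n0
   \<and> (\<forall>\<^sub>F t in at_right 0. set_integrable lborel {0<..} (\<lambda>x. n x t))
   \<and> ((\<lambda>t. LINT x:{0<..}|lborel. \<bar>n x t - n0 x\<bar>) \<longlongrightarrow> 0) (at_right 0)
   \<comment> \<open>boundary behaviour at x = 0\<close>
   \<and> (\<forall>t>0. \<exists>L. ((\<lambda>x. n x t) \<longlongrightarrow> L) (at_right 0))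
   \<and> (\<forall>s t. 0 < s \<and> s \<le> t \<longrightarrow>
        ((\<lambda>x. integral {s..t} (\<lambda>\<tau>. \<bar>x^2 * px n x \<tau>\<bar>)) \<longlongrightarrow> 0) (at_right 0))
   \<comment> \<open>differential inequality n_t \<ge> \<partial>_x J(x,n)\<close>
   \<and> (\<forall>x>0. \<forall>t>0.
        pt n x t \<ge> deriv (\<lambda>y. Jflux y (n y t) (px n y t)) x)
   \<comment> \<open>flux condition at infinity\<close>
   \<and> (\<forall>s t. 0 < s \<and> s \<le> t \<longrightarrow>
        Liminf at_top (\<lambda>x. ereal (integral {s..t} (\<lambda>\<tau>. Jflux x (n x \<tau>) (px n x \<tau>)))) \<ge> 0)"

end

theory Submission
  imports Defs "HOL-Real_Asymp.Real_Asymp"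
begin


definition FF :: "real \<Rightarrow> real" where "FF y = 1 / (exp y - 1)"
definition HH :: "real \<Rightarrow> real" where "HH y = FF y + (FF y)^2"
definition GG :: "real \<Rightarrow> real \<Rightarrow> real" where "GG g y = FF y + g * HH y"
definition GG1 :: "real \<Rightarrow> real \<Rightarrow> real" where
  "GG1 g y = - HH y - g * (HH y * (1 + 2 * FF y))"
definition GG2 :: "real \<Rightarrow> real \<Rightarrow> real" where
  "GG2 g y = HH y * (1 + 2 * FF y) + g * (HH y * (1 + 2 * FF y)^2 + 2 * (HH y)^2)"
definition SS :: "real \<Rightarrow> real \<Rightarrow> real" where "SS g y = y^2 * GG g y"
definition SS1 :: "real \<Rightarrow> real \<Rightarrow> real" where "SS1 g y = 2 * y * GG g y + y^2 * GG1 g y"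
definition SS2 :: "real \<Rightarrow> real \<Rightarrow> real" where
  "SS2 g y = 2 * GG g y + 4 * y * GG1 g y + y^2 * GG2 g y"

lemma exp_ne1: "y \<noteq> 0 \<Longrightarrow> exp y - 1 \<noteq> (0::real)" by simp

lemma aux1: "(d::real) \<noteq> 0 \<Longrightarrow> - (d+1) / d^2 = - (1/d + (1/d)^2)"
  by (simp add: field_simps power2_eq_square)
lemma aux2: "(d::real) \<noteq> 0 \<Longrightarrow> y^2 / d + g * (y^2 * (d+1) / d^2) = y^2 * (1/d + g * (1/d + (1/d)^2))"
  by (simp add: field_simps power2_eq_square)
lemma aux3: "(d::real) \<noteq> 0 \<Longrightarrow> y^2 * (d+1) / d^2 = y^2 * (1/d + (1/d)^2)"
  by (simp add: field_simps power2_eq_square)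

lemma FF_deriv: "y \<noteq> 0 \<Longrightarrow> (FF has_real_derivative - HH y) (at y)"
proof -
  assume y: "y \<noteq> 0"
  have "((\<lambda>y. 1 / (exp y - 1)) has_real_derivative - exp y / (exp y - 1)^2) (at y)"
    using y by (auto intro!: derivative_eq_intros simp: power2_eq_square)
  moreover have "- exp y / (exp y - 1)^2 = - HH y"
    using aux1[OF exp_ne1[OF y]] by (simp add: HH_def FF_def)
  ultimately show ?thesis unfolding FF_def[abs_def] by simp
qed

lemma HH_deriv: "y \<noteq> 0 \<Longrightarrow> (HH has_real_derivative - (HH y * (1 + 2 * FF y))) (at y)"
proof -
  assume y: "y \<noteq> 0"
  have "((\<lambda>y. FF y + (FF y)^2) has_real_derivative (- HH y + 2 * FF y * (- HH y))) (at y)"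
    by (auto intro!: derivative_eq_intros FF_deriv[OF y])
  thus ?thesis unfolding HH_def[abs_def] by (simp add: algebra_simps)
qed

lemma GG_deriv: "y \<noteq> 0 \<Longrightarrow> (GG g has_real_derivative GG1 g y) (at y)"
proof -
  assume y: "y \<noteq> 0"
  have "((\<lambda>y. FF y + g * HH y) has_real_derivative (- HH y + g * (- (HH y * (1 + 2 * FF y))))) (at y)"
    by (auto intro!: derivative_eq_intros FF_deriv[OF y] HH_deriv[OF y])
  thus ?thesis unfolding GG_def[abs_def] GG1_def by (simp add: algebra_simps)
qed

lemma GG1_deriv: "y \<noteq> 0 \<Longrightarrow> (GG1 g has_real_derivative GG2 g y) (at y)"
proof -
  assume y: "y \<noteq> 0"
  have "((\<lambda>y. - HH y - g * (HH y * (1 + 2 * FF y))) has_real_derivative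
     (- (- (HH y * (1 + 2 * FF y))) - g * ((- (HH y * (1 + 2 * FF y))) * (1 + 2 * FF y) + HH y * (2 * (- HH y))))) (at y)"
    by (auto intro!: derivative_eq_intros FF_deriv[OF y] HH_deriv[OF y])
  thus ?thesis unfolding GG1_def[abs_def] GG2_def by (simp add: algebra_simps power2_eq_square)
qed

lemma SS_deriv: "y \<noteq> 0 \<Longrightarrow> (SS g has_real_derivative SS1 g y) (at y)"
proof -
  assume y: "y \<noteq> 0"
  have "((\<lambda>y. y^2 * GG g y) has_real_derivative (2 * y * GG g y + y^2 * GG1 g y)) (at y)"
    by (auto intro!: derivative_eq_intros GG_deriv[OF y])
  thus ?thesis unfolding SS_def[abs_def] SS1_def by simp
qed

lemma SS1_deriv: "y \<noteq> 0 \<Longrightarrow> (SS1 g has_real_derivative SS2 g y) (at y)"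
proof -
  assume y: "y \<noteq> 0"
  have "((\<lambda>y. 2 * y * GG g y + y^2 * GG1 g y) has_real_derivative
      (2 * GG g y + 2 * y * GG1 g y + (2 * y * GG1 g y + y^2 * GG2 g y))) (at y)"
    by (auto intro!: derivative_eq_intros GG_deriv[OF y] GG1_deriv[OF y])
  thus ?thesis unfolding SS1_def[abs_def] SS2_def by (simp add: algebra_simps)
qed

lemma SS_eq: "n0hat y + g * mfun y = SS g y"
proof (cases "y = 0")
  case True thus ?thesis by (simp add: SS_def n0hat_def mfun_def)
next
  case False
  hence d: "exp y - 1 \<noteq> 0" by simp
  show ?thesis unfolding SS_def GG_def HH_def FF_def n0hat_def mfun_def
    using aux2[OF d, of y g] by simp
qed

lemma mfun_eq: "mfun y = y^2 * HH y"
proof (cases "y = 0")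
  case True thus ?thesis by (simp add: mfun_def)
next
  case False
  hence d: "exp y - 1 \<noteq> 0" by simp
  show ?thesis unfolding HH_def FF_def mfun_def
    using aux3[OF d, of y] by simp
qed

lemma J_eq: "Jflux y (SS g y) (SS1 g y) = g^2 * (y^2 * HH y)^2"
  unfolding Jflux_def SS_def SS1_def GG_def GG1_def HH_def
  by (simp add: algebra_simps power2_eq_square)

lemma cont_FF: "continuous_on {0<..} FF"
  unfolding FF_def by (intro continuous_intros) auto

lemma cont_HH: "continuous_on {0<..} HH"
  unfolding HH_def by (intro continuous_intros cont_FF)

lemma cont_SS: "continuous_on {0<..} (SS g)" "continuous_on {0<..} (SS1 g)" "continuous_on {0<..} (SS2 g)"
  unfolding SS_def SS1_def SS2_def GG_def GG1_def GG2_def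
  by (intro continuous_intros cont_FF cont_HH)+



lemma key_ineq: assumes "(y::real) \<ge> 0" shows "2 * (exp y - 1) \<le> y * (exp y + 1)"
proof -
  let ?f = "\<lambda>z::real. z * (exp z + 1) - 2 * (exp z - 1)"
  have "?f 0 \<le> ?f y"
  proof (rule DERIV_nonneg_imp_increasing_open[OF assms])
    fix z :: real assume z: "0 < z" "z < y"
    have d: "(?f has_real_derivative (1 - exp z + z * exp z)) (at z)"
      by (auto intro!: derivative_eq_intros simp: algebra_simps)
    have "1 - z \<le> exp (-z)" using exp_ge_add_one_self[of "-z"] by simp
    hence "(1 - z) * exp z \<le> exp (-z) * exp z" by (rule mult_right_mono) simp
    hence "(1 - z) * exp z \<le> 1" by (simp add: exp_minus field_simps)
    hence "1 - exp z + z * exp z \<ge> 0" by (simp add: algebra_simps)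
    with d show "\<exists>y. (?f has_real_derivative y) (at z) \<and> 0 \<le> y" by blast
  next
    show "continuous_on {0..y} ?f" by (intro continuous_intros)
  qed
  thus ?thesis by simp
qed

lemma FF_pos: "y > 0 \<Longrightarrow> FF y > 0" unfolding FF_def by simp
lemma HH_pos: "y > 0 \<Longrightarrow> HH y > 0" unfolding HH_def using FF_pos by (simp add: add_pos_nonneg)

lemma y_FF_ge: assumes "y > 0" shows "y * (1 + 2 * FF y) \<ge> 2"
proof -
  have d: "exp y - 1 > 0" using assms by simp
  have "2 * (exp y - 1) \<le> y * (exp y + 1)" using key_ineq assms by simp
  also have "y * (exp y + 1) = y * (1 + 2 * FF y) * (exp y - 1)"
    using d unfolding FF_def by (simp add: field_simps)
  finally show ?thesis using d by (rule mult_right_le_imp_le)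
qed

lemma Jderiv: assumes "y > 0"
  shows "((\<lambda>y. g^2 * (y^2 * HH y)^2) has_real_derivative
     g^2 * (2 * (y^2 * HH y) * (2 * y * HH y + y^2 * (- (HH y * (1 + 2 * FF y)))))) (at y)"
  using assms by (auto intro!: derivative_eq_intros HH_deriv)

lemma Jderiv_nonpos: assumes "y > 0"
  shows "g^2 * (2 * (y^2 * HH y) * (2 * y * HH y + y^2 * (- (HH y * (1 + 2 * FF y))))) \<le> 0"
proof -
  have h: "HH y > 0" using HH_pos assms .
  have "2 * y * HH y + y^2 * (- (HH y * (1 + 2 * FF y))) = y * HH y * (2 - y * (1 + 2 * FF y))"
    by (simp add: algebra_simps power2_eq_square)
  also have "\<dots> \<le> 0" using y_FF_ge[OF assms] assms h
    by (intro mult_nonneg_nonpos) auto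
  finally have "2 * y * HH y + y^2 * (- (HH y * (1 + 2 * FF y))) \<le> 0" .
  moreover have "g^2 * (2 * (y^2 * HH y)) \<ge> 0" using h by simp
  ultimately show ?thesis by (metis mult.assoc mult_nonneg_nonpos)
qed

lemma lim_SS: "((\<lambda>y. SS g y) \<longlongrightarrow> g) (at_right 0)"
proof -
  have a: "((\<lambda>y::real. y^2 * (1 / (exp y - 1))) \<longlongrightarrow> 0) (at_right 0)" by real_asymp
  have b: "((\<lambda>y::real. y^2 * (1 / (exp y - 1) + (1 / (exp y - 1))^2)) \<longlongrightarrow> 1) (at_right 0)" by real_asymp
  have "((\<lambda>y. y^2 * (1 / (exp y - 1)) + g * (y^2 * (1 / (exp y - 1) + (1 / (exp y - 1))^2))) \<longlongrightarrow> 0 + g * 1) (at_right 0)"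
    by (intro tendsto_intros a b)
  thus ?thesis unfolding SS_def GG_def HH_def FF_def by (simp add: algebra_simps)
qed

lemma lim_SS1: "((\<lambda>y. y^2 * SS1 g y) \<longlongrightarrow> 0) (at_right 0)"
proof -
  have a: "((\<lambda>y::real. y^3 * FF y) \<longlongrightarrow> 0) (at_right 0)" unfolding FF_def by real_asymp
  have b: "((\<lambda>y::real. y^3 * HH y) \<longlongrightarrow> 0) (at_right 0)" unfolding HH_def FF_def by real_asymp
  have c: "((\<lambda>y::real. y^4 * HH y) \<longlongrightarrow> 0) (at_right 0)" unfolding HH_def FF_def by real_asymp
  have d: "((\<lambda>y::real. y^4 * (HH y * FF y)) \<longlongrightarrow> 0) (at_right 0)" unfolding HH_def FF_def by real_asymp
  have "((\<lambda>y. 2 * (y^3 * FF y) + 2 * g * (y^3 * HH y)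
      - y^4 * HH y - g * (y^4 * HH y)
      - 2 * g * (y^4 * (HH y * FF y))) \<longlongrightarrow>
      2 * 0 + 2 * g * 0 - 0 - g * 0 - 2 * g * 0) (at_right 0)"
    by (intro tendsto_intros a b c d)
  moreover have "\<And>y. y^2 * SS1 g y = 2 * (y^3 * FF y) + 2 * g * (y^3 * HH y)
      - y^4 * HH y - g * (y^4 * HH y) - 2 * g * (y^4 * (HH y * FF y))"
    unfolding SS1_def GG_def GG1_def
    by (simp add: algebra_simps power2_eq_square power3_eq_cube power4_eq_xxxx)
  ultimately show ?thesis by simp
qed



lemma bnd: assumes y: "(y::real) > 0"
  shows "y^2 * FF y \<le> 16 * exp (-(1/2)*y) \<and> y^2 * HH y \<le> 32 * exp (-(1/2)*y)"
proof (cases "y \<le> 1")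
  case True
  define d where "d = exp y - 1"
  have d: "d \<ge> y" "d > 0" using exp_ge_add_one_self[of y] y unfolding d_def by (auto simp del: exp_ge_add_one_self)
  have F: "FF y = 1 / d" unfolding FF_def d_def ..
  have "y * y \<le> y * d" using d y by (intro mult_left_mono) auto
  hence a: "y^2 * FF y \<le> y" using d y by (simp add: F power2_eq_square field_simps)
  have "y \<le> d" using d by simp
  hence b: "y * FF y \<le> 1" using d by (simp add: F field_simps)
  have c: "y * FF y \<ge> 0" using y d by (simp add: F)
  have "(y * FF y)^2 \<le> 1" using b c by (simp add: power_le_one)
  hence h: "y^2 * HH y \<le> 2" using a True unfolding HH_def by (simp add: algebra_simps power2_eq_square)
  have e: "exp (-(1/2)*y) \<ge> 1/2" using exp_ge_add_one_self[of "-(1/2)*y"] True by linarith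
  show ?thesis using a h e True by linarith
next
  case False
  define E where "E = exp (y/2)"
  have E2: "exp y = E^2" unfolding E_def by (simp add: power2_eq_square exp_add[symmetric])
  have Em: "exp (-(1/2)*y) = 1 / E" unfolding E_def by (simp add: exp_minus field_simps)
  have Epos: "E > 0" unfolding E_def by simp
  have Eq: "1 + y/2 + (y/2)^2/2 \<le> E" unfolding E_def using y by (intro exp_lower_Taylor_quadratic) simp
  hence yE: "y^2 \<le> 8 * E" using y by (simp add: power2_eq_square field_simps)
  have "exp y \<ge> 2" using exp_ge_add_one_self[of y] False by linarith
  hence E22: "E^2 \<ge> 2" using E2 by simp
  define d where "d = exp y - 1"
  have dE: "d \<ge> E^2 / 2" "d \<ge> 1" unfolding d_def using E2 E22 by auto
  have F: "FF y = 1 / d" unfolding FF_def d_def ..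
  have "y^2 * E \<le> 8 * E * E" using yE Epos by (intro mult_right_mono) auto
  also have "\<dots> \<le> 16 * d" using dE by (simp add: power2_eq_square)
  finally have "y^2 * E \<le> 16 * d" .
  hence a: "y^2 * FF y \<le> 16 * (1 / E)" using dE Epos by (simp add: F field_simps)
  have F1: "FF y \<le> 1" "FF y \<ge> 0" using dE by (auto simp: F)
  hence "(FF y)^2 \<le> FF y" using mult_left_mono[OF F1(1) F1(2)] by (simp add: power2_eq_square)
  hence "HH y \<le> 2 * FF y" unfolding HH_def by simp
  hence "y^2 * HH y \<le> y^2 * (2 * FF y)" by (intro mult_left_mono) auto
  with a show ?thesis unfolding Em by linarith
qed

lemma SS_nonneg: "g \<ge> 0 \<Longrightarrow> y > 0 \<Longrightarrow> SS g y \<ge> 0"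
  unfolding SS_def GG_def using FF_pos HH_pos
  by (simp add: add_nonneg_nonneg less_imp_le)

lemma SS_integrable: assumes "g \<ge> 0" shows "set_integrable lborel {0<..} (SS g)"
proof (rule set_integrable_bound)
  have "(\<lambda>y::real. exp (-(1/2)*y)) integrable_on {0..}"
    by (rule integrable_on_exp_minus_to_infinity) simp
  hence "(\<lambda>y::real. exp (-(1/2)*y)) absolutely_integrable_on {0..}"
    by (subst absolutely_integrable_on_iff_nonneg) auto
  from integrable_mult_right[OF this [unfolded set_integrable_def], of "16 + 32 * g"]
  have "integrable lborel (\<lambda>x. indicat_real {0..} x *\<^sub>R ((16 + 32 * g) * exp (-(1/2)*x)))"
    by (subst (asm) integrable_completion) (auto simp: mult_ac)
  hence "set_integrable lborel {0..} (\<lambda>x. (16 + 32 * g) * exp (-(1/2)*x))"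
    unfolding set_integrable_def .
  thus "set_integrable lborel {0<..} (\<lambda>x. (16 + 32 * g) * exp (-(1/2)*x))"
    by (rule set_integrable_subset) auto
next
  show "set_borel_measurable lborel {0<..} (SS g)"
    unfolding set_borel_measurable_def
    using borel_measurable_continuous_on_indicator[OF _ cont_SS(1), of g] by simp
next
  show "AE x in lborel. x \<in> {0<..} \<longrightarrow> norm (SS g x) \<le> norm ((16 + 32 * g) * exp (-(1/2)*x))"
  proof (rule AE_I2, intro impI)
    fix x :: real assume x: "x \<in> {0<..}"
    hence x0: "x > 0" by simp
    have "SS g x = x^2 * FF x + g * (x^2 * HH x)" unfolding SS_def GG_def by (simp add: algebra_simps)
    also have "\<dots> \<le> 16 * exp (-(1/2)*x) + g * (32 * exp (-(1/2)*x))"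
      using bnd[OF x0] assms by (intro add_mono mult_left_mono) auto
    finally have "SS g x \<le> (16 + 32 * g) * exp (-(1/2)*x)" by (simp add: algebra_simps)
    thus "norm (SS g x) \<le> norm ((16 + 32 * g) * exp (-(1/2)*x))"
      using SS_nonneg[OF assms x0] assms by simp
  qed
qed



lemma px_SS: "y \<noteq> 0 \<Longrightarrow> px (\<lambda>x t. SS g x) y t = SS1 g y"
  unfolding px_def by (rule DERIV_imp_deriv[OF SS_deriv])

lemma pxx_SS: assumes "y > 0" shows "pxx (\<lambda>x t. SS g x) y t = SS2 g y"
proof -
  have "eventually (\<lambda>z. z \<in> {0<..}) (nhds y)" using assms
    by (intro eventually_nhds_in_open) auto
  hence ev: "eventually (\<lambda>z. px (\<lambda>x t. SS g x) z t = SS1 g z) (nhds y)"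
    by eventually_elim (simp add: px_SS)
  have "pxx (\<lambda>x t. SS g x) y t = deriv (SS1 g) y"
    unfolding pxx_def by (rule deriv_cong_ev[OF ev refl])
  also have "\<dots> = SS2 g y" using assms by (intro DERIV_imp_deriv SS1_deriv) simp
  finally show ?thesis .
qed

lemma cont_prod: "continuous_on {0<..} f \<Longrightarrow> (\<And>x t. x > 0 \<Longrightarrow> h x t = f x)
   \<Longrightarrow> continuous_on ({0<..} \<times> {0<..}) (\<lambda>(x::real, t::real). h x t)"
proof -
  assume c: "continuous_on {0<..} f" and e: "\<And>x t. x > 0 \<Longrightarrow> h x t = f x"
  have "continuous_on ({0<..} \<times> {0<..}) (\<lambda>p::real\<times>real. f (fst p))"
    by (rule continuous_on_compose2[OF c continuous_on_fst]) auto
  thus ?thesis by (rule continuous_on_eq) (auto simp: e)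
qed

theorem lemma3p6:
  fixes \<gamma> :: real
  assumes "\<gamma> \<ge> 0"
  shows "kompaneets_supersolution (\<lambda>x. n0hat x + \<gamma> * mfun x)
           (\<lambda>x t. n0hat x + \<gamma> * mfun x)"
proof -
  have e1: "(\<lambda>x. n0hat x + \<gamma> * mfun x) = SS \<gamma>" by (rule ext) (simp add: SS_eq)
  have e2: "(\<lambda>x t. n0hat x + \<gamma> * mfun x) = (\<lambda>x t. SS \<gamma> x)" by (intro ext) (simp add: SS_eq)
  define n where "n = (\<lambda>(x::real) (t::real). SS \<gamma> x)"
  have nn: "\<And>y t. n y t = SS \<gamma> y" unfolding n_def by simp
  have pxn: "\<And>y t. y > 0 \<Longrightarrow> px n y t = SS1 \<gamma> y" unfolding n_def by (simp add: px_SS)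
  have pxxn: "\<And>y t. y > 0 \<Longrightarrow> pxx n y t = SS2 \<gamma> y" unfolding n_def by (simp add: pxx_SS)
  have ptn: "\<And>y t. pt n y t = 0" unfolding n_def pt_def by simp
  have C: "C21 n"
    unfolding C21_def
  proof (intro conjI allI impI)
    fix x t :: real assume x: "x > 0" and t: "t > 0"
    show "(\<lambda>y. n y t) differentiable (at x)" unfolding n_def
      using SS_deriv[of x \<gamma>] x real_differentiable_def by auto
    have ev: "eventually (\<lambda>z. SS1 \<gamma> z = px n z t) (nhds x)"
      using eventually_nhds_in_open[of "{0<..}" x] x
      by (auto elim!: eventually_mono simp: pxn)
    have "(SS1 \<gamma> has_real_derivative SS2 \<gamma> x) (at x)" using SS1_deriv[of x \<gamma>] x by simp
    hence "((\<lambda>y. px n y t) has_real_derivative SS2 \<gamma> x) (at x)"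
      using DERIV_cong_ev[OF refl ev refl] by simp
    thus "(\<lambda>y. px n y t) differentiable (at x)" using real_differentiable_def by blast
    show "(\<lambda>\<tau>. n x \<tau>) differentiable (at t)" unfolding n_def by simp
  next
    show "continuous_on ({0<..} \<times> {0<..}) (\<lambda>(x, t). n x t)"
      by (rule cont_prod[OF cont_SS(1)]) (simp add: n_def)
    show "continuous_on ({0<..} \<times> {0<..}) (\<lambda>(x, t). px n x t)"
      by (rule cont_prod[OF cont_SS(2)]) (simp add: pxn)
    show "continuous_on ({0<..} \<times> {0<..}) (\<lambda>(x, t). pxx n x t)"
      by (rule cont_prod[OF cont_SS(3)]) (simp add: pxxn)
    show "continuous_on ({0<..} \<times> {0<..}) (\<lambda>(x, t). pt n x t)"
      by (simp add: ptn)
  qed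
  have I: "set_integrable lborel {0<..} (SS \<gamma>)" by (rule SS_integrable[OF assms])
  have B: "\<forall>t>0. \<exists>L. ((\<lambda>x. n x t) \<longlongrightarrow> L) (at_right 0)"
    unfolding n_def using lim_SS by blast
  have B2: "\<forall>s t. 0 < s \<and> s \<le> t \<longrightarrow>
        ((\<lambda>x. integral {s..t} (\<lambda>\<tau>. \<bar>x^2 * px n x \<tau>\<bar>)) \<longlongrightarrow> 0) (at_right 0)"
  proof (intro allI impI)
    fix s t :: real assume st: "0 < s \<and> s \<le> t"
    have "((\<lambda>x. (t - s) * \<bar>x^2 * SS1 \<gamma> x\<bar>) \<longlongrightarrow> (t - s) * \<bar>0\<bar>) (at_right 0)"
      by (intro tendsto_intros lim_SS1)
    hence l: "((\<lambda>x. (t - s) * \<bar>x^2 * SS1 \<gamma> x\<bar>) \<longlongrightarrow> 0) (at_right 0)" by simp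
    have "eventually (\<lambda>x. (t - s) * \<bar>x^2 * SS1 \<gamma> x\<bar> = integral {s..t} (\<lambda>\<tau>. \<bar>x^2 * px n x \<tau>\<bar>)) (at_right 0)"
      using eventually_at_right_less[of "0::real"]
      by eventually_elim (use st in \<open>simp add: pxn\<close>)
    with l show "((\<lambda>x. integral {s..t} (\<lambda>\<tau>. \<bar>x^2 * px n x \<tau>\<bar>)) \<longlongrightarrow> 0) (at_right 0)"
      by (rule Lim_transform_eventually)
  qed
  have D: "\<forall>x>0. \<forall>t>0. pt n x t \<ge> deriv (\<lambda>y. Jflux y (n y t) (px n y t)) x"
  proof (intro allI impI)
    fix x t :: real assume x: "x > 0" and t: "t > 0"
    have ev: "eventually (\<lambda>y. Jflux y (n y t) (px n y t) = \<gamma>^2 * (y^2 * HH y)^2) (nhds x)"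
      using eventually_nhds_in_open[of "{0<..}" x] x
      by (auto elim!: eventually_mono simp: pxn nn J_eq)
    have "deriv (\<lambda>y. Jflux y (n y t) (px n y t)) x = deriv (\<lambda>y. \<gamma>^2 * (y^2 * HH y)^2) x"
      by (rule deriv_cong_ev[OF ev refl])
    also have "\<dots> = \<gamma>^2 * (2 * (x^2 * HH x) * (2 * x * HH x + x^2 * (- (HH x * (1 + 2 * FF x)))))"
      by (rule DERIV_imp_deriv[OF Jderiv[OF x]])
    also have "\<dots> \<le> 0" by (rule Jderiv_nonpos[OF x])
    finally show "pt n x t \<ge> deriv (\<lambda>y. Jflux y (n y t) (px n y t)) x" by (simp add: ptn)
  qed
  have F: "\<forall>s t. 0 < s \<and> s \<le> t \<longrightarrow>
        Liminf at_top (\<lambda>x. ereal (integral {s..t} (\<lambda>\<tau>. Jflux x (n x \<tau>) (px n x \<tau>)))) \<ge> 0"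
  proof (intro allI impI)
    fix s t :: real assume st: "0 < s \<and> s \<le> t"
    have "eventually (\<lambda>x. 0 \<le> ereal (integral {s..t} (\<lambda>\<tau>. Jflux x (n x \<tau>) (px n x \<tau>)))) at_top"
      using eventually_gt_at_top[of "0::real"]
    proof eventually_elim
      case (elim x)
      have "integral {s..t} (\<lambda>\<tau>. Jflux x (n x \<tau>) (px n x \<tau>)) = (t - s) * (\<gamma>^2 * (x^2 * HH x)^2)"
        using elim st by (simp add: pxn nn J_eq)
      also have "\<dots> \<ge> 0" using st by simp
      finally show ?case by simp
    qed
    thus "Liminf at_top (\<lambda>x. ereal (integral {s..t} (\<lambda>\<tau>. Jflux x (n x \<tau>) (px n x \<tau>)))) \<ge> 0"
      by (rule Liminf_bounded)
  qed
  have "kompaneets_supersolution (SS \<gamma>) n"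
    unfolding kompaneets_supersolution_def
    using C I B B2 D F by (simp add: n_def)
  thus ?thesis unfolding e1 e2 n_def .
qed

end
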